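(* Suppose $F$ is regular, i.e., $r''$ is bounded above on some neighborhood $(1-\delta,1)$ of $1$. Define \[ k=\sup\Big\{\alpha>1:\ r(v)r''(v)+r'(v)\le 1 \text{ for all } v\in(0,1) \text{ with } \psi(v)\ge \tfrac1\alpha\Big\}\in(1,\infty]. \] If $q_h\le kc$, then \[ r(v)r''(v)+r'(v)\le 1 \quad\text{for all } v\in\big(\overline p(q_h),\overline p(q_\ell)\big). \]
   Context: Let $0<q_\ell<q_h<\infty$, $Q=[q_\ell,q_h]$, and let $c$ be a real number with $0<c<q_\ell$. Let $F$ be a probability distribution on $[0,1]$ with support $[0,1]$ admitting a twice continuously differentiable density $f:(0,1)\to\mathbb{R}_{>0}$. Define the inverse hazard rate $r(v)=(1-F(v))/f(v)$ and the virtual valuation $\psi(v)=v-r(v)$ on $(0,1)$, and assume $\psi'(v)>0$ whenever $\psi(v)>0$. For $q\in Q$, $p(q)$ is the unique maximizer over $p\in\mathbb{R}$ of $(p-c)\big(1-F(p/q)\big)$, and $\overline p(q)=p(q)/q$. *)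

theory Defs
  imports "HOL-Analysis.Analysis"
begin

definition C2_on :: "(real \<Rightarrow> real) \<Rightarrow> real set \<Rightarrow> bool" where
  "C2_on g S \<longleftrightarrow> (\<forall>x\<in>S. g differentiable at x) \<and>
                  (\<forall>x\<in>S. deriv g differentiable at x) \<and>
                  continuous_on S (deriv (deriv g))"

definition inv_hazard :: "(real \<Rightarrow> real) \<Rightarrow> (real \<Rightarrow> real) \<Rightarrow> real \<Rightarrow> real" where
  "inv_hazard F f v = (1 - F v) / f v"

definition virt_val :: "(real \<Rightarrow> real) \<Rightarrow> (real \<Rightarrow> real) \<Rightarrow> real \<Rightarrow> real" where
  "virt_val F f v = v - inv_hazard F f v"

definition opt_price :: "(real \<Rightarrow> real) \<Rightarrow> real \<Rightarrow> real \<Rightarrow> real" where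
  "opt_price F c q = (THE p. \<forall>p'. (p' - c) * (1 - F (p' / q)) \<le> (p - c) * (1 - F (p / q)))"

definition opt_price_bar :: "(real \<Rightarrow> real) \<Rightarrow> real \<Rightarrow> real \<Rightarrow> real" where
  "opt_price_bar F c q = opt_price F c q / q"

definition k_const :: "(real \<Rightarrow> real) \<Rightarrow> (real \<Rightarrow> real) \<Rightarrow> ereal" where
  "k_const F f = Sup (ereal ` {\<alpha>::real. \<alpha> > 1 \<and>
      (\<forall>v\<in>{0<..<1}. virt_val F f v \<ge> 1 / \<alpha> \<longrightarrow>
         inv_hazard F f v * deriv (deriv (inv_hazard F f)) v + deriv (inv_hazard F f) v \<le> 1)})"

end

theory Submission imports Defs begin

lemma F_deriv:
  fixes F f :: "real \<Rightarrow> real"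
  assumes dens: "\<forall>x\<in>{0..1}. (f has_integral F x) {0..x}"
    and fc: "continuous_on {0<..<1} f"
    and x: "0 < x" "x < 1"
  shows "(F has_real_derivative f x) (at x)"
proof -
  define a where "a = x/2"
  define b where "b = (x+1)/2"
  have ab: "0 < a" "a < x" "x < b" "b < 1" using x by (auto simp: a_def b_def)
  have fcab: "continuous_on {a..b} f" using fc by (rule continuous_on_subset) (use ab in auto)
  have eq: "F a + integral {a..u} f = F u" if "u \<in> {a<..<b}" for u
  proof -
    have u: "0 \<le> u" "u \<le> 1" "a \<le> u" using that ab by auto
    have iu: "(f has_integral F u) {0..u}" using dens u by auto
    have ia: "(f has_integral F a) {0..a}" using dens ab by auto
    have "integral {0..a} f + integral {a..u} f = integral {0..u} f"
      by (rule Henstock_Kurzweil_Integration.integral_combine[OF _ _ has_integral_integrable[OF iu]]) (use ab u in linarith)+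
    moreover have "integral {0..u} f = F u" using iu by (rule integral_unique)
    moreover have "integral {0..a} f = F a" using ia by (rule integral_unique)
    ultimately show ?thesis by linarith
  qed
  have "((\<lambda>u. integral {a..u} f) has_vector_derivative f x) (at x within {a..b})"
    by (rule integral_has_vector_derivative) (use fcab ab in auto)
  hence "((\<lambda>u. integral {a..u} f) has_real_derivative f x) (at x)"
    using ab by (simp add: has_real_derivative_iff_has_vector_derivative at_within_Icc_at)
  hence "((\<lambda>u. F a + integral {a..u} f) has_real_derivative f x) (at x)"
    using DERIV_add[OF DERIV_const] by fastforce
  then show ?thesis
    by (rule has_field_derivative_transform_within_open[where S="{a<..<b}"]) (use ab eq in auto)
qed

lemma F_cont:
  fixes F f :: "real \<Rightarrow> real"
  assumes dens: "\<forall>x\<in>{0..1}. (f has_integral F x) {0..x}"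
  shows "continuous_on {0..1} F"
proof -
  have "f integrable_on {0..1}" using dens by auto
  hence "continuous_on {0..1} (\<lambda>x. integral {0..x} f)" by (rule indefinite_integral_continuous_1)
  moreover have "\<And>x. x \<in> {0..1} \<Longrightarrow> integral {0..x} f = F x" using dens by (simp add: integral_unique)
  ultimately show ?thesis
    using continuous_on_cong[of "{0..1}" "{0..1}" "\<lambda>x. integral {0..x} f" F] by blast
qed

lemma F_mono:
  fixes F f :: "real \<Rightarrow> real"
  assumes dens: "\<forall>x\<in>{0..1}. (f has_integral F x) {0..x}"
    and fc: "continuous_on {0<..<1} f"
    and fpos: "\<forall>v\<in>{0<..<1}. f v > 0"
    and xy: "0 \<le> x" "x < y" "y \<le> 1"
  shows "F x < F y"
proof (rule DERIV_pos_imp_increasing_open[OF xy(2)])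
  fix z assume "x < z" "z < y"
  then show "\<exists>d. DERIV F z :> d \<and> d > 0"
    using F_deriv[OF dens fc, of z] fpos xy by auto
next
  show "continuous_on {x..y} F"
    using F_cont[OF dens] by (rule continuous_on_subset) (use xy in auto)
qed


theorem proposition2:
  fixes F f :: "real \<Rightarrow> real" and q_l q_h c :: real
  assumes "0 < q_l" and "q_l < q_h"
    and "0 < c" and "c < q_l"
    and F_below: "\<forall>x. x \<le> 0 \<longrightarrow> F x = 0"
    and F_above: "\<forall>x. 1 \<le> x \<longrightarrow> F x = 1"
    and F_density: "\<forall>x\<in>{0..1}. (f has_integral F x) {0..x}"
    and f_pos: "\<forall>v\<in>{0<..<1}. f v > 0"
    and f_C2: "C2_on f {0<..<1}"
    and psi_incr: "\<forall>v\<in>{0<..<1}. virt_val F f v > 0 \<longrightarrow> deriv (virt_val F f) v > 0"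
    and regular: "\<exists>\<delta>>0. \<exists>M. \<forall>v\<in>{0<..<1}. 1 - \<delta> < v \<longrightarrow>
                     deriv (deriv (inv_hazard F f)) v \<le> M"
    and "ereal q_h \<le> k_const F f * ereal c"
  shows "\<forall>v\<in>{opt_price_bar F c q_h <..< opt_price_bar F c q_l}.
           inv_hazard F f v * deriv (deriv (inv_hazard F f)) v + deriv (inv_hazard F f) v \<le> 1"
proof -
  define \<psi> where "\<psi> = virt_val F f"
  have fc: "continuous_on {0<..<1} f"
    using f_C2 unfolding C2_on_def
    by (meson continuous_at_imp_continuous_on differentiable_imp_continuous_within)
  have Fd: "DERIV F x :> f x" if "0 < x" "x < 1" for x
    using F_deriv[OF F_density fc] that by blast
  have Fm: "F x < F y" if "0 \<le> x" "x < y" "y \<le> 1" for x y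
    using F_mono[OF F_density fc f_pos] that by blast
  have F0: "F 0 = 0" and F1: "F 1 = 1" using F_below F_above by auto
  have Fle1: "F x \<le> 1" for x
  proof (cases "x \<le> 0")
    case True then show ?thesis using F_below by auto
  next
    case False
    show ?thesis
    proof (cases "x < 1")
      case True then show ?thesis using Fm[of x 1] False F1 by auto
    next
      case False then show ?thesis using F_above by auto
    qed
  qed
  have Fge0: "0 \<le> F x" for x
  proof (cases "x \<le> 0")
    case True then show ?thesis using F_below by auto
  next
    case False
    show ?thesis
    proof (cases "x < 1")
      case True then show ?thesis using Fm[of 0 x] False F0 by auto
    next
      case False then show ?thesis using F_above by auto
    qed
  qed
  have Flt1: "F x < 1" if "x < 1" for x
  proof (cases "x \<le> 0")
    case True then show ?thesis using F_below by auto
  next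
    case False then show ?thesis using Fm[of x 1] that F1 by auto
  qed
  have psi_eq: "\<psi> v = v - (1 - F v) / f v" for v
    by (simp add: \<psi>_def virt_val_def inv_hazard_def)
  have psi_diff: "\<psi> differentiable at v" if "0 < v" "v < 1" for v
  proof -
    have "F differentiable at v"
      using differentiableI[OF has_field_derivative_imp_has_derivative[OF Fd[OF that]]] .
    moreover have "f differentiable at v" using f_C2 that unfolding C2_on_def by auto
    moreover have "f v \<noteq> 0" using f_pos that by force
    ultimately have "(\<lambda>v. v - (1 - F v) / f v) differentiable at v"
      by (intro derivative_intros) auto
    moreover have "\<psi> = (\<lambda>v. v - (1 - F v) / f v)" using psi_eq by auto
    ultimately show ?thesis by simp
  qed
  have psi_der: "DERIV \<psi> v :> deriv \<psi> v" if "0 < v" "v < 1" for v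
    using psi_diff[OF that] DERIV_deriv_iff_real_differentiable by blast
  have psi_cont: "continuous_on {a..b} \<psi>" if "0 < a" "b < 1" for a b
    using psi_diff that
    by (intro continuous_at_imp_continuous_on ballI differentiable_imp_continuous_within) auto
  have psi_mono: "\<psi> a < \<psi> b" if ab: "0 < a" "a < b" "b < 1" "\<psi> a > 0" for a b
  proof (rule ccontr)
    assume "\<not> \<psi> a < \<psi> b" hence le: "\<psi> b \<le> \<psi> a" by simp
    obtain m where m: "m \<in> {a..b}" "\<forall>y\<in>{a..b}. \<psi> y \<le> \<psi> m"
      using continuous_attains_sup[of "{a..b}" \<psi>] psi_cont[of a b] ab by auto
    have "deriv \<psi> a > 0" using psi_incr ab unfolding \<psi>_def by auto
    then obtain d where d: "d > 0" "\<forall>h>0. h < d \<longrightarrow> \<psi> a < \<psi> (a + h)"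
      using DERIV_pos_inc_right[OF psi_der[of a]] ab by auto
    define h where "h = min (d/2) ((b-a)/2)"
    have h1a: "h > 0" unfolding h_def using d ab by simp
    have h1b: "h \<le> d/2" unfolding h_def by (rule min.cobounded1)
    have h1c: "h \<le> (b-a)/2" unfolding h_def by (rule min.cobounded2)
    note h1 = h1a h1b h1c
    have h: "h > 0" "h < d" "a + h \<in> {a..b}" using h1 d ab by auto
    have "\<psi> a < \<psi> (a + h)" using d h by blast
    also have "\<psi> (a + h) \<le> \<psi> m" using m(2) h(3) by blast
    finally have "\<psi> a < \<psi> m" .
    hence am: "a < m" "m < b" using le m(1) by (auto simp: order.order_iff_strict)
    have "deriv \<psi> m > 0" using psi_incr ab am \<open>\<psi> a < \<psi> m\<close> unfolding \<psi>_def by auto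
    moreover have "deriv \<psi> m = 0"
    proof (rule DERIV_local_max[OF psi_der[of m]])
      show "0 < m" "m < 1" using am ab by auto
      show "0 < min (m - a) (b - m)" using am by auto
      show "\<forall>y. \<bar>m - y\<bar> < min (m - a) (b - m) \<longrightarrow> \<psi> y \<le> \<psi> m"
        using m(2) by (auto simp: abs_if split: if_splits)
    qed
    ultimately show False by simp
  qed
  have opt: "0 < opt_price_bar F c q \<and> opt_price_bar F c q < 1 \<and> \<psi> (opt_price_bar F c q) = c/q"
    if q: "c < q" for q
  proof -
    have q0: "0 < q" using q \<open>0 < c\<close> by simp
    define G where "G p = (p - c) * (1 - F (p / q))" for p
    define pm where "pm = (c+q)/2"
    have Gpm: "G pm > 0"
    proof -
      have "pm / q < 1" using q q0 by (simp add: pm_def field_simps)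
      then show ?thesis using Flt1[of "pm/q"] q by (simp add: G_def pm_def)
    qed
    have key: "c < p \<and> p < q \<and> \<psi> (p/q) = c/q" if pmax: "\<forall>p'. G p' \<le> G p" for p
    proof -
      have Gp: "G p > 0" using pmax Gpm by (meson less_le_trans)
      have cp: "c < p"
      proof (rule ccontr)
        assume "\<not> c < p"
        hence "G p \<le> 0" unfolding G_def using Fle1[of "p/q"]
          by (intro mult_nonpos_nonneg) auto
        then show False using Gp by simp
      qed
      have pq: "p < q"
      proof (rule ccontr)
        assume "\<not> p < q"
        hence "p / q \<ge> 1" using q0 by (simp add: field_simps)
        hence "G p = 0" unfolding G_def using F_above by auto
        then show False using Gp by simp
      qed
      define v where "v = p / q"
      have v: "0 < v" "v < 1" using cp pq q0 \<open>0 < c\<close> by (auto simp: v_def field_simps)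
      have dq: "DERIV (\<lambda>p. p / q) p :> 1 / q"
        using DERIV_cdivide[OF DERIV_ident, of q p] by simp
      have dF: "DERIV (\<lambda>p. F (p/q)) p :> f v * (1/q)"
      proof -
        have "DERIV F (p/q) :> f v" using Fd[OF v] by (simp add: v_def)
        from DERIV_chain2[OF this dq] show ?thesis .
      qed
      have dG: "DERIV G p :> 1 * (1 - F (p/q)) + (0 - f v * (1/q)) * (p - c)"
        unfolding G_def
        using DERIV_mult[OF DERIV_diff[OF DERIV_ident DERIV_const[of c]] DERIV_diff[OF DERIV_const[of 1] dF]]
        by simp
      have "1 * (1 - F (p/q)) + (0 - f v * (1/q)) * (p - c) = 0"
        using DERIV_local_max[OF dG zero_less_one] pmax by blast
      hence e: "1 - F v = f v * (p - c) / q" by (simp add: v_def)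
      have fv: "f v > 0" using f_pos v by auto
      have "(1 - F v) / f v = (p - c) / q" using e fv by (simp add: field_simps)
      hence "\<psi> v = c / q" using psi_eq[of v] q0 by (simp add: v_def field_simps)
      then show ?thesis using cp pq by (simp add: v_def)
    qed
    have Gcont: "continuous_on {c..q} G"
    proof -
      have "continuous_on {c..q} (\<lambda>p. F (p / q))"
      proof (rule continuous_on_compose2[OF F_cont[OF F_density]])
        show "continuous_on {c..q} (\<lambda>p. p / q)" using q0 by (intro continuous_intros) auto
        show "(\<lambda>p. p / q) ` {c..q} \<subseteq> {0..1}" using q0 \<open>0 < c\<close> by (auto simp: field_simps)
      qed
      then show ?thesis unfolding G_def by (intro continuous_intros)
    qed
    obtain p0 where p0: "p0 \<in> {c..q}" "\<forall>y\<in>{c..q}. G y \<le> G p0"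
      using continuous_attains_sup[OF compact_Icc _ Gcont] q by auto
    have "G c = 0" by (simp add: G_def)
    moreover have "G c \<le> G p0" using p0(2) q by auto
    ultimately have G0: "G p0 \<ge> 0" by simp
    have ex: "\<forall>p'. G p' \<le> G p0"
    proof
      fix p'
      show "G p' \<le> G p0"
      proof (cases "p' < c")
        case True
        hence "G p' \<le> 0" unfolding G_def using Fle1[of "p'/q"]
          by (intro mult_nonpos_nonneg) auto
        then show ?thesis using G0 by simp
      next
        case False
        show ?thesis
        proof (cases "p' > q")
          case True
          hence "p' / q \<ge> 1" using q0 by (simp add: field_simps)
          hence "G p' = 0" unfolding G_def using F_above by auto
          then show ?thesis using G0 by simp
        next
          case False
          then show ?thesis using p0 \<open>\<not> p' < c\<close> by auto
        qed
      qed
    qed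
    have uniq: "p1 = p2" if "\<forall>p'. G p' \<le> G p1" "\<forall>p'. G p' \<le> G p2" for p1 p2
    proof -
      have k1: "c < p1 \<and> p1 < q \<and> \<psi> (p1/q) = c/q" using key that(1) by blast
      have k2: "c < p2 \<and> p2 < q \<and> \<psi> (p2/q) = c/q" using key that(2) by blast
      have pos: "c / q > 0" using q0 \<open>0 < c\<close> by simp
      have r1: "0 < p1/q" "p1/q < 1" using k1 q0 \<open>0 < c\<close> by (auto simp: field_simps)
      have r2: "0 < p2/q" "p2/q < 1" using k2 q0 \<open>0 < c\<close> by (auto simp: field_simps)
      have "\<not> p1/q < p2/q" using psi_mono[of "p1/q" "p2/q"] r1 r2 k1 k2 pos by auto
      moreover have "\<not> p2/q < p1/q" using psi_mono[of "p2/q" "p1/q"] r1 r2 k1 k2 pos by auto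
      ultimately have "p1/q = p2/q" by simp
      then show ?thesis using q0 by (simp add: field_simps)
    qed
    have ex1: "\<exists>!p. \<forall>p'. G p' \<le> G p" using ex uniq by blast
    have "\<forall>p'. G p' \<le> G (THE p. \<forall>p'. G p' \<le> G p)" by (rule theI'[OF ex1])
    hence "\<forall>p'. G p' \<le> G (opt_price F c q)" by (simp add: opt_price_def G_def)
    from key[OF this] show ?thesis using q0 \<open>0 < c\<close>
      by (auto simp: opt_price_bar_def field_simps)
  qed
  have ch: "c < q_h" using assms(2) assms(4) by simp
  have oh: "0 < opt_price_bar F c q_h" "\<psi> (opt_price_bar F c q_h) = c / q_h"
    using opt[OF ch] by auto
  have ol: "opt_price_bar F c q_l < 1" using opt[OF \<open>c < q_l\<close>] by auto
  have qh0: "0 < q_h" using ch \<open>0 < c\<close> by simp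
  show ?thesis
  proof
    fix v assume v: "v \<in> {opt_price_bar F c q_h<..<opt_price_bar F c q_l}"
    have v01: "0 < v" "v < 1" using v oh ol by auto
    have psiv: "\<psi> v > c / q_h"
      using psi_mono[of "opt_price_bar F c q_h" v] oh v v01 qh0 \<open>0 < c\<close> by auto
    have psipos: "\<psi> v > 0" using psiv qh0 \<open>0 < c\<close> by (smt (verit) divide_pos_pos)
    have lt: "1 / \<psi> v < q_h / c"
    proof -
      have "1 / \<psi> v < 1 / (c / q_h)"
        using psiv qh0 \<open>0 < c\<close> psipos by (intro divide_strict_left_mono) auto
      then show ?thesis by simp
    qed
    have "ereal (1 / \<psi> v) < k_const F f"
    proof (cases "k_const F f")
      case (real r)
      hence "q_h \<le> r * c" using assms(12) by simp
      hence "q_h / c \<le> r" using \<open>0 < c\<close> by (simp add: field_simps)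
      then show ?thesis using real lt by simp
    next
      case PInf then show ?thesis by simp
    next
      case MInf then show ?thesis using assms(12) \<open>0 < c\<close> by simp
    qed
    then obtain \<beta> where \<beta>: "\<beta> > 1" and
      cond: "\<forall>v\<in>{0<..<1}. virt_val F f v \<ge> 1 / \<beta> \<longrightarrow>
         inv_hazard F f v * deriv (deriv (inv_hazard F f)) v + deriv (inv_hazard F f) v \<le> 1"
      and b: "1 / \<psi> v < \<beta>"
      unfolding k_const_def less_Sup_iff by auto
    have "1 / \<beta> < 1 / (1 / \<psi> v)"
      using b psipos \<beta> by (intro divide_strict_left_mono) auto
    hence "1 / \<beta> \<le> virt_val F f v" by (simp add: \<psi>_def)
    then show "inv_hazard F f v * deriv (deriv (inv_hazard F f)) v + deriv (inv_hazard F f) v \<le> 1"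
      using cond v01 by auto
  qed
qed

end
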